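(* The Euler characteristic $\chi$ is a ring homomorphism from the strong ring $(\mathcal{G},\oplus,\boxtimes)$ to $\mathbb{Z}$; that is, $\chi(0)=0$, $\chi(K_1)=1$, $\chi(G\oplus H)=\chi(G)+\chi(H)$ and $\chi(G\boxtimes H)=\chi(G)\chi(H)$ for all $G,H\in\mathcal{G}$.
   Context: Graphs are finite simple graphs up to isomorphism. $G\oplus H$ is the disjoint union. The strong product $G\boxtimes H$ of $G=(V,E)$, $H=(W,F)$ has vertex set $V\times W$, distinct $(a,b),(c,d)$ adjacent iff ($a=c$ and $\{b,d\}\in F$) or ($b=d$ and $\{a,c\}\in E$) or ($\{a,c\}\in E$ and $\{b,d\}\in F$). $\mathcal{G}$ is the Grothendieck group of the monoid (graphs, $\oplus$), elements $A-B$ with $A-B=C-D$ iff $A\oplus D\oplus K=B\oplus C\oplus K$ for some graph $K$; the strong ring is $\mathcal{G}$ with $\boxtimes$ extended bilinearly, zero the empty graph and one $K_1$. For a graph $G$, $\chi(G)=\sum_{k\ge0}(-1)^k v_k(G)$ where $v_k(G)$ is the number of complete subgraphs $K_{k+1}$ of $G$, and $\chi(A-B)=\chi(A)-\chi(B)$. *)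

theory Defs
  imports Main "HOL-Library.Nat_Bijection"
begin

text \<open>Graphs are considered
  up to isomorphism (relation graph_iso).\<close>

type_synonym graph = "nat set \<times> nat set set"

definition wf_graph :: "graph \<Rightarrow> bool" where
  "wf_graph G \<longleftrightarrow> finite (fst G) \<and>
     (\<forall>e\<in>snd G. \<exists>a b. a \<in> fst G \<and> b \<in> fst G \<and> a \<noteq> b \<and> e = {a, b})"

definition graph_iso :: "graph \<Rightarrow> graph \<Rightarrow> bool" where
  "graph_iso G H \<longleftrightarrow> (\<exists>f. bij_betw f (fst G) (fst H) \<and>
     (\<forall>a\<in>fst G. \<forall>b\<in>fst G. {a, b} \<in> snd G \<longleftrightarrow> {f a, f b} \<in> snd H))"

definition empty_graph :: graph where
  "empty_graph = ({}, {})"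

definition K1 :: graph where
  "K1 = ({0}, {})"

text \<open>Disjoint union: the two vertex sets are tagged by even / odd numbers.\<close>
definition dunion :: "graph \<Rightarrow> graph \<Rightarrow> graph" (infixl "\<oplus>\<^sub>g" 65) where
  "dunion G H =
     ((\<lambda>x. 2 * x) ` fst G \<union> (\<lambda>x. 2 * x + 1) ` fst H,
      (\<lambda>e. (\<lambda>x. 2 * x) ` e) ` snd G \<union> (\<lambda>e. (\<lambda>x. 2 * x + 1) ` e) ` snd H)"

text \<open>Strong product: vertex (a,b) is encoded as prod_encode (a,b).\<close>
definition sprod :: "graph \<Rightarrow> graph \<Rightarrow> graph" (infixl "\<boxtimes>\<^sub>g" 70) where
  "sprod G H =
     (prod_encode ` (fst G \<times> fst H),
      {{prod_encode (a, b), prod_encode (c, d)} | a b c d.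
          a \<in> fst G \<and> c \<in> fst G \<and> b \<in> fst H \<and> d \<in> fst H \<and> (a, b) \<noteq> (c, d) \<and>
          ((a = c \<and> {b, d} \<in> snd H) \<or> (b = d \<and> {a, c} \<in> snd G) \<or>
           ({a, c} \<in> snd G \<and> {b, d} \<in> snd H))})"

text \<open>v_k(G): number of complete subgraphs K_{k+1} of G (each is determined by its
  vertex set, a (k+1)-element set of pairwise adjacent vertices).\<close>
definition num_cliques :: "nat \<Rightarrow> graph \<Rightarrow> nat" where
  "num_cliques k G = card {C. C \<subseteq> fst G \<and> card C = k + 1 \<and>
      (\<forall>a\<in>C. \<forall>b\<in>C. a \<noteq> b \<longrightarrow> {a, b} \<in> snd G)}"

text \<open>chi(G) = sum_{k \<ge> 0} (-1)^k v_k(G); terms with k \<ge> card V vanish.\<close>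
definition euler_char :: "graph \<Rightarrow> int" where
  "euler_char G = (\<Sum>k\<le>card (fst G). (-1) ^ k * int (num_cliques k G))"

text \<open>Grothendieck group: an element A - B is represented by the pair (A, B).\<close>
type_synonym ggraph = "graph \<times> graph"

definition wf_gg :: "ggraph \<Rightarrow> bool" where
  "wf_gg p \<longleftrightarrow> wf_graph (fst p) \<and> wf_graph (snd p)"

definition gg_eq :: "ggraph \<Rightarrow> ggraph \<Rightarrow> bool" where
  "gg_eq p q \<longleftrightarrow> (\<exists>K. wf_graph K \<and>
     graph_iso (fst p \<oplus>\<^sub>g snd q \<oplus>\<^sub>g K) (snd p \<oplus>\<^sub>g fst q \<oplus>\<^sub>g K))"

definition gg_zero :: ggraph where "gg_zero = (empty_graph, empty_graph)"
definition gg_one :: ggraph where "gg_one = (K1, empty_graph)"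

definition gg_add :: "ggraph \<Rightarrow> ggraph \<Rightarrow> ggraph" where
  "gg_add p q = (fst p \<oplus>\<^sub>g fst q, snd p \<oplus>\<^sub>g snd q)"

text \<open>Bilinear extension of the strong product: (A-B)(C-D) = (AC + BD) - (AD + BC).\<close>
definition gg_mul :: "ggraph \<Rightarrow> ggraph \<Rightarrow> ggraph" where
  "gg_mul p q = ((fst p \<boxtimes>\<^sub>g fst q) \<oplus>\<^sub>g (snd p \<boxtimes>\<^sub>g snd q),
                 (fst p \<boxtimes>\<^sub>g snd q) \<oplus>\<^sub>g (snd p \<boxtimes>\<^sub>g fst q))"

definition gg_chi :: "ggraph \<Rightarrow> int" where
  "gg_chi p = euler_char (fst p) - euler_char (snd p)"

end

theory Submission
  imports Defs
begin

lemma pow_alt: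
  assumes "finite B" "B \<noteq> {}"
  shows "(\<Sum>T\<in>Pow B. (-1::int) ^ card T) = 0"
proof -
  have "card {T. T \<subseteq> B \<and> {} \<subseteq> T \<and> even(card T)} = card {T. T \<subseteq> B \<and> {} \<subseteq> T \<and> odd(card T)}"
    using assms by (intro card_subsupersets_even_odd) auto
  then have "card {T. T \<in> Pow B \<and> even(card T)} = card {T. T \<in> Pow B \<and> odd(card T)}" by simp
  then show ?thesis using assms by (intro sum_alternating_cancels) auto
qed

lemma pow_alt_ne:
  assumes "finite B" "B \<noteq> {}"
  shows "(\<Sum>T\<in>{T\<in>Pow B. T \<noteq> {}}. (-1::int) ^ card T) = -1"
proof -
  have "Pow B = insert {} {T\<in>Pow B. T \<noteq> {}}" by auto
  then have e: "(\<Sum>T\<in>Pow B. (-1::int) ^ card T) = (\<Sum>T\<in>insert {} {T\<in>Pow B. T \<noteq> {}}. (-1::int) ^ card T)"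
    by (rule arg_cong)
  moreover have "(\<Sum>T\<in>insert {} {T\<in>Pow B. T \<noteq> {}}. (-1::int) ^ card T) = 1 + (\<Sum>T\<in>{T\<in>Pow B. T \<noteq> {}}. (-1::int) ^ card T)"
    using assms by (subst sum.insert) auto
  ultimately have "(\<Sum>T\<in>Pow B. (-1::int) ^ card T) = 1 + (\<Sum>T\<in>{T\<in>Pow B. T \<noteq> {}}. (-1::int) ^ card T)"
    by (simp only:)
  then show ?thesis using pow_alt[OF assms] by simp
qed

definition phi :: "'a set \<Rightarrow> 'b set \<Rightarrow> int" where
  "phi A B = (\<Sum>S\<in>{S\<in>Pow (A\<times>B). fst ` S = A}. (-1) ^ card S)"

lemma phi_insert:
  assumes "finite A" "finite B" "a \<notin> A"
  shows "phi (insert a A) B = phi A B * (\<Sum>T\<in>{T\<in>Pow B. T \<noteq> {}}. (-1::int) ^ card T)"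
proof -
  let ?X = "{S\<in>Pow (A\<times>B). fst ` S = A}"
  let ?Y = "{T\<in>Pow B. T \<noteq> {}}"
  let ?h = "\<lambda>(S0,T). S0 \<union> {a}\<times>T"
  have inj: "inj_on ?h (?X \<times> ?Y)"
  proof (rule inj_onI)
    fix p q assume "p \<in> ?X \<times> ?Y" "q \<in> ?X \<times> ?Y" "?h p = ?h q"
    then obtain S0 T S1 T1 where pq: "p = (S0,T)" "q = (S1,T1)"
      and h: "S0 \<union> {a}\<times>T = S1 \<union> {a}\<times>T1" and S: "S0 \<in> ?X" "S1 \<in> ?X"
      by (cases p, cases q) auto
    show "p = q" unfolding pq
    proof -
    have "S0 = (S0 \<union> {a}\<times>T) \<inter> (A\<times>B)" using S assms(3) by auto
    moreover have "S1 = (S1 \<union> {a}\<times>T1) \<inter> (A\<times>B)" using S assms(3) by auto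
    ultimately have 1: "S0 = S1" using h by simp
    have "T = {b. (a,b) \<in> S0 \<union> {a}\<times>T}" using S assms(3) by auto
    moreover have "T1 = {b. (a,b) \<in> S1 \<union> {a}\<times>T1}" using S assms(3) by auto
    ultimately have "T = T1" using h by simp
    with 1 show "(S0,T) = (S1,T1)" by simp
  qed
  qed
  have img: "?h ` (?X \<times> ?Y) = {S\<in>Pow (insert a A\<times>B). fst ` S = insert a A}"
  proof
    show "?h ` (?X \<times> ?Y) \<subseteq> {S\<in>Pow (insert a A\<times>B). fst ` S = insert a A}"
    proof
      fix x assume "x \<in> ?h ` (?X \<times> ?Y)"
      then obtain S0 T where a1: "(S0,T) \<in> ?X \<times> ?Y" and x: "x = ?h (S0,T)" by auto
      from a1 have "T \<noteq> {}" "fst ` S0 = A" by auto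
      then have "fst ` (S0 \<union> {a}\<times>T) = insert a A" by (auto simp: image_Un)
      moreover have "S0 \<union> {a}\<times>T \<subseteq> insert a A \<times> B" using a1 by auto
      ultimately show "x \<in> {S\<in>Pow (insert a A\<times>B). fst ` S = insert a A}" using x by simp
    qed
  next
    show "{S\<in>Pow (insert a A\<times>B). fst ` S = insert a A} \<subseteq> ?h ` (?X \<times> ?Y)"
    proof clarify
      fix S assume S: "S \<subseteq> insert a A \<times> B" "fst ` S = insert a A"
      let ?S0 = "S \<inter> (A\<times>B)" and ?T = "{b. (a,b) \<in> S}"
      have "S = ?h (?S0, ?T)" using S(1) by auto
      moreover have "fst ` ?S0 = A"
      proof
        show "fst ` ?S0 \<subseteq> A" by auto
        show "A \<subseteq> fst ` ?S0"
        proof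
          fix x assume "x \<in> A"
          then have "x \<in> fst ` S" using S(2) by auto
          then obtain y where "(x,y) \<in> S" by force
          then show "x \<in> fst ` ?S0" using S(1) \<open>x \<in> A\<close> by (auto intro: rev_image_eqI)
        qed
      qed
      moreover have "?T \<noteq> {}"
      proof -
        have "a \<in> fst ` S" using S(2) by auto
        then obtain y where "(a,y) \<in> S" by force
        then show ?thesis by auto
      qed
      moreover have "?T \<subseteq> B" using S(1) by auto
      ultimately show "S \<in> ?h ` (?X \<times> ?Y)" by (intro rev_image_eqI[of "(?S0,?T)"]) auto
    qed
  qed
  have card: "card (?h p) = card (fst p) + card (snd p)" if "p \<in> ?X \<times> ?Y" for p
  proof -
    obtain S0 T where p: "p = (S0,T)" by force
    have f: "finite S0" "finite T" using that p assms finite_subset[of _ "A\<times>B"] finite_subset[of _ B] by auto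
    have "S0 \<inter> {a}\<times>T = {}" using that p assms(3) by auto
    then have "card (S0 \<union> {a}\<times>T) = card S0 + card ({a}\<times>T)" using f by (intro card_Un_disjoint) auto
    moreover have "card ({a}\<times>T) = card T" by (simp add: card_cartesian_product)
    ultimately show ?thesis using p by simp
  qed
  have "phi (insert a A) B = (\<Sum>p\<in>?X \<times> ?Y. (-1::int) ^ card (?h p))"
    unfolding phi_def img[symmetric] by (rule sum.reindex[OF inj, unfolded comp_def])
  also have "\<dots> = (\<Sum>p\<in>?X \<times> ?Y. (-1::int) ^ card (fst p) * (-1) ^ card (snd p))"
    by (intro sum.cong refl) (simp add: card power_add)
  also have "\<dots> = phi A B * (\<Sum>T\<in>?Y. (-1::int) ^ card T)"
    unfolding phi_def sum_product sum.cartesian_product by (simp add: case_prod_beta)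
  finally show ?thesis .
qed

lemma phi_val:
  assumes "finite A" "finite B" "B \<noteq> {}"
  shows "phi A B = (-1) ^ card A"
  using assms(1)
proof (induction A rule: finite_induct)
  case empty
  have "{S\<in>Pow ({}\<times>B). fst ` S = {}} = {{}}" by auto
  then show ?case by (simp add: phi_def)
next
  case (insert a A)
  then show ?case using phi_insert[OF insert(1) assms(2) insert(2)] pow_alt_ne[OF assms(2,3)] by simp
qed

lemma pow_split:
  fixes f :: "'a set \<Rightarrow> 'c::comm_monoid_add"
  assumes "finite B" "B \<noteq> {}"
  shows "sum f (Pow B) = f B + f {} + sum f (Pow B - {B} - {{}})"
proof -
  have "sum f (Pow B) = f B + sum f (Pow B - {B})" using assms by (intro sum.remove) auto
  moreover have "sum f (Pow B - {B}) = f {} + sum f (Pow B - {B} - {{}})" using assms by (intro sum.remove) auto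
  ultimately show ?thesis by (simp add: add.assoc)
qed

definition gsum :: "'a set \<Rightarrow> 'b set \<Rightarrow> int" where
  "gsum A B = (\<Sum>S\<in>{S\<in>Pow (A\<times>B). fst ` S = A \<and> snd ` S = B}. (-1) ^ card S)"

lemma phi_decomp:
  assumes "finite A" "finite B"
  shows "phi A B = (\<Sum>B'\<in>Pow B. gsum A B')"
proof -
  have "phi A B = (\<Sum>B'\<in>Pow B. \<Sum>S\<in>{S\<in>{S\<in>Pow (A\<times>B). fst ` S = A}. snd ` S = B'}. (-1) ^ card S)"
    unfolding phi_def using assms by (intro sum.group[symmetric]) auto
  also have "\<dots> = (\<Sum>B'\<in>Pow B. gsum A B')"
    unfolding gsum_def
  proof (rule sum.cong[OF refl])
    fix B' assume "B' \<in> Pow B"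
    then have "{S\<in>{S\<in>Pow (A\<times>B). fst ` S = A}. snd ` S = B'} = {S\<in>Pow (A\<times>B'). fst ` S = A \<and> snd ` S = B'}"
      by (auto intro: rev_image_eqI)
    then show "(\<Sum>S\<in>{S\<in>{S\<in>Pow (A\<times>B). fst ` S = A}. snd ` S = B'}. (-1::int) ^ card S) = (\<Sum>S\<in>{S\<in>Pow (A\<times>B'). fst ` S = A \<and> snd ` S = B'}. (-1) ^ card S)"
      by simp
  qed
  finally show ?thesis .
qed

lemma gsum_empty:
  assumes "A \<noteq> {}" shows "gsum A {} = 0"
proof -
  have "{S\<in>Pow (A\<times>({}::'b set)). fst ` S = A \<and> snd ` S = {}} = {}" using assms by auto
  then show ?thesis unfolding gsum_def by simp
qed

lemma gsum_val:
  assumes "finite A" "A \<noteq> {}" "finite B" "B \<noteq> {}"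
  shows "gsum A B = - ((-1) ^ (card A + card B))"
  using assms(3,4)
proof (induction "card B" arbitrary: B rule: less_induct)
  case (less B)
  let ?R = "Pow B - {B} - {{}}"
  have fB: "finite B" by fact
  have IH: "gsum A B' = - ((-1) ^ (card A + card B'))" if "B' \<in> ?R" for B'
  proof -
    have "B' \<subset> B" using that by auto
    then have "card B' < card B" using fB by (simp add: psubset_card_mono)
    moreover have "finite B'" using \<open>B' \<subset> B\<close> fB finite_subset by auto
    ultimately show ?thesis using less.hyps that by auto
  qed
  have "phi A B = gsum A B + gsum A ({}::'b set) + (\<Sum>B'\<in>?R. gsum A B')"
    using phi_decomp[OF assms(1) fB] pow_split[OF fB less.prems(2), of "gsum A"] by simp
  also have "(\<Sum>B'\<in>?R. gsum A B') = (\<Sum>B'\<in>?R. - ((-1) ^ card A) * (-1) ^ card B')"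
    using IH by (intro sum.cong refl) (simp add: power_add)
  also have "\<dots> = - ((-1) ^ card A) * (\<Sum>B'\<in>?R. (-1) ^ card B')"
    by (simp add: sum_distrib_left)
  finally have 1: "phi A B = gsum A B - (-1) ^ card A * (\<Sum>B'\<in>?R. (-1) ^ card B')"
    using gsum_empty[OF assms(2)] by simp
  have "(\<Sum>B'\<in>Pow B. (-1::int) ^ card B') = (-1) ^ card B + 1 + (\<Sum>B'\<in>?R. (-1) ^ card B')"
    using pow_split[OF fB less.prems(2), of "\<lambda>B'. (-1::int) ^ card B'"] by simp
  then have 2: "(\<Sum>B'\<in>?R. (-1::int) ^ card B') = - 1 - (-1) ^ card B"
    using pow_alt[OF fB less.prems(2)] by simp
  have 3: "phi A B = (-1) ^ card A" using phi_val[OF assms(1) fB less.prems(2)] .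
  from 1 2 3 show ?case by (simp add: power_add algebra_simps)
qed

definition cl :: "graph \<Rightarrow> nat set set" where
  "cl G = {C. C \<subseteq> fst G \<and> C \<noteq> {} \<and> (\<forall>a\<in>C. \<forall>b\<in>C. a \<noteq> b \<longrightarrow> {a, b} \<in> snd G)}"

lemma cl_finite: "finite (fst G) \<Longrightarrow> finite (cl G)"
  by (rule finite_subset[of _ "Pow (fst G)"]) (auto simp: cl_def)

lemma chi_alt:
  assumes fin: "finite (fst G)"
  shows "euler_char G = (\<Sum>C\<in>cl G. - ((-1) ^ card C))"
proof -
  let ?n = "card (fst G)"
  have cardle: "card C \<le> ?n" if "C \<in> cl G" for C
    using that fin by (auto simp: cl_def intro: card_mono)
  have cardle': "card C - 1 \<le> ?n" if "C \<in> cl G" for C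
    using cardle[OF that] by simp
  have "(\<Sum>C\<in>cl G. - ((-1::int) ^ card C)) =
        (\<Sum>k\<in>{..?n}. \<Sum>C\<in>{C\<in>cl G. card C - 1 = k}. - ((-1) ^ card C))"
    using cl_finite[OF fin] cardle' by (intro sum.group[symmetric]) auto
  also have "\<dots> = (\<Sum>k\<in>{..?n}. (-1) ^ k * int (num_cliques k G))"
  proof (rule sum.cong[OF refl])
    fix k
    have eq: "{C\<in>cl G. card C - 1 = k} = {C. C \<subseteq> fst G \<and> card C = k + 1 \<and>
      (\<forall>a\<in>C. \<forall>b\<in>C. a \<noteq> b \<longrightarrow> {a, b} \<in> snd G)}" (is "?L = ?R")
    proof
      show "?L \<subseteq> ?R"
      proof
        fix C assume "C \<in> ?L"
        moreover then have "finite C" using fin by (auto simp: cl_def intro: finite_subset)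
        moreover have "C \<noteq> {}" using \<open>C \<in> ?L\<close> by (auto simp: cl_def)
        ultimately have "card C > 0" by (simp add: card_gt_0_iff)
        then show "C \<in> ?R" using \<open>C \<in> ?L\<close> by (auto simp: cl_def)
      qed
      show "?R \<subseteq> ?L" by (auto simp: cl_def)
    qed
    have "(\<Sum>C\<in>?L. - ((-1::int) ^ card C)) = (\<Sum>C\<in>?R. (-1) ^ k)"
      unfolding eq by (intro sum.cong refl) auto
    then show "(\<Sum>C\<in>?L. - ((-1::int) ^ card C)) = (-1) ^ k * int (num_cliques k G)"
      by (simp add: num_cliques_def)
  qed
  finally show ?thesis by (simp add: euler_char_def)
qed

lemma chi_iso:
  assumes iso: "graph_iso G H" and fin: "finite (fst G)"
  shows "euler_char G = euler_char H"
proof -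
  obtain f where bij: "bij_betw f (fst G) (fst H)"
    and e: "\<And>a b. a \<in> fst G \<Longrightarrow> b \<in> fst G \<Longrightarrow> {a, b} \<in> snd G \<longleftrightarrow> {f a, f b} \<in> snd H"
    using iso unfolding graph_iso_def by blast
  have inj: "inj_on f (fst G)" and im: "f ` fst G = fst H" using bij by (auto simp: bij_betw_def)
  have finH: "finite (fst H)" using bij fin bij_betw_finite by blast
  have injc: "inj_on (image f) (cl G)"
    by (rule inj_on_subset[OF inj_on_image_Pow[OF inj]]) (auto simp: cl_def)
  have clH: "cl H = image f ` cl G"
  proof
    show "cl H \<subseteq> image f ` cl G"
    proof
      fix C' assume C': "C' \<in> cl H"
      let ?C = "{x\<in>fst G. f x \<in> C'}"
      have "f ` ?C = C'" using C' im by (auto simp: cl_def)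
      moreover have "?C \<in> cl G"
      proof -
        have "?C \<noteq> {}" using C' im \<open>f ` ?C = C'\<close> by (auto simp: cl_def)
        moreover have "{a, b} \<in> snd G" if "a \<in> ?C" "b \<in> ?C" "a \<noteq> b" for a b
        proof -
          have "f a \<noteq> f b" using inj that by (auto dest: inj_onD)
          then have "{f a, f b} \<in> snd H" using C' that by (auto simp: cl_def)
          then show ?thesis using e that by auto
        qed
        ultimately show ?thesis by (auto simp: cl_def)
      qed
      ultimately show "C' \<in> image f ` cl G" by blast
    qed
    show "image f ` cl G \<subseteq> cl H"
    proof
      fix C' assume "C' \<in> image f ` cl G"
      then obtain C where C: "C \<in> cl G" and C': "C' = f ` C" by blast
      have "{x, y} \<in> snd H" if xy: "x \<in> C'" "y \<in> C'" "x \<noteq> y" for x y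
      proof -
        obtain a b where ab: "a \<in> C" "b \<in> C" "x = f a" "y = f b" using xy C' by blast
        then have "a \<noteq> b" using xy by auto
        then have "{a, b} \<in> snd G" using C ab by (auto simp: cl_def)
        then show ?thesis using e ab C by (auto simp: cl_def)
      qed
      moreover have "C' \<subseteq> fst H" using C C' im by (auto simp: cl_def)
      ultimately show "C' \<in> cl H" using C C' by (auto simp: cl_def)
    qed
  qed
  have cards: "card (f ` C) = card C" if "C \<in> cl G" for C
    using that inj by (auto simp: cl_def intro!: card_image inj_on_subset[OF inj])
  have "euler_char H = (\<Sum>C\<in>image f ` cl G. - ((-1) ^ card C))"
    using chi_alt[OF finH] clH by simp
  also have "\<dots> = (\<Sum>C\<in>cl G. - ((-1) ^ card (f ` C)))"
    by (rule sum.reindex[OF injc, unfolded comp_def])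
  also have "\<dots> = euler_char G"
    using chi_alt[OF fin] cards by simp
  finally show ?thesis by simp
qed

lemma cl_image:
  assumes inj: "inj h" and sub: "h ` fst G \<subseteq> fst G'"
    and e: "\<And>a b. a \<in> fst G \<Longrightarrow> b \<in> fst G \<Longrightarrow> {h a, h b} \<in> snd G' \<longleftrightarrow> {a, b} \<in> snd G"
  shows "image h ` cl G = {C \<in> cl G'. C \<subseteq> h ` fst G}"
proof
  show "image h ` cl G \<subseteq> {C \<in> cl G'. C \<subseteq> h ` fst G}"
  proof
    fix C' assume "C' \<in> image h ` cl G"
    then obtain C where C: "C \<in> cl G" and C': "C' = h ` C" by blast
    have "{x, y} \<in> snd G'" if xy: "x \<in> C'" "y \<in> C'" "x \<noteq> y" for x y
    proof -
      obtain a b where ab: "a \<in> C" "b \<in> C" "x = h a" "y = h b" using xy C' by blast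
      then have "a \<noteq> b" using xy by auto
      then have "{a, b} \<in> snd G" using C ab by (auto simp: cl_def)
      then show ?thesis using e ab C by (auto simp: cl_def)
    qed
    moreover have "C' \<subseteq> h ` fst G" using C C' by (auto simp: cl_def)
    moreover then have "C' \<subseteq> fst G'" using sub by auto
    ultimately show "C' \<in> {C \<in> cl G'. C \<subseteq> h ` fst G}" using C C' by (auto simp: cl_def)
  qed
  show "{C \<in> cl G'. C \<subseteq> h ` fst G} \<subseteq> image h ` cl G"
  proof
    fix C' assume C': "C' \<in> {C \<in> cl G'. C \<subseteq> h ` fst G}"
    let ?C = "{x\<in>fst G. h x \<in> C'}"
    have "h ` ?C = C'" using C' by auto
    moreover have "?C \<in> cl G"
    proof -
      have "?C \<noteq> {}" using C' \<open>h ` ?C = C'\<close> by (auto simp: cl_def)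
      moreover have "{a, b} \<in> snd G" if "a \<in> ?C" "b \<in> ?C" "a \<noteq> b" for a b
      proof -
        have "h a \<noteq> h b" using inj that by (auto dest: injD)
        then have "{h a, h b} \<in> snd G'" using C' that by (auto simp: cl_def)
        then show ?thesis using e that by auto
      qed
      ultimately show ?thesis by (auto simp: cl_def)
    qed
    ultimately show "C' \<in> image h ` cl G" by blast
  qed
qed

lemma sum_image_cl:
  assumes inj: "inj h"
  shows "(\<Sum>C\<in>image h ` X. - ((-1::int) ^ card C)) = (\<Sum>C\<in>X. - ((-1) ^ card C))"
proof -
  have "inj_on (image h) X" using inj by (auto simp: inj_on_def inj_image_eq_iff)
  then have "(\<Sum>C\<in>image h ` X. - ((-1::int) ^ card C)) = (\<Sum>C\<in>X. - ((-1) ^ card (h ` C)))"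
    by (rule sum.reindex[unfolded comp_def])
  also have "\<dots> = (\<Sum>C\<in>X. - ((-1) ^ card C))"
    using inj by (intro sum.cong refl) (simp add: card_image inj_on_subset)
  finally show ?thesis .
qed

lemma chi_union:
  assumes fG: "finite (fst G)" and fH: "finite (fst H)"
  shows "euler_char (G \<oplus>\<^sub>g H) = euler_char G + euler_char H"
proof -
  let ?U = "G \<oplus>\<^sub>g H"
  let ?d = "\<lambda>x::nat. 2 * x" and ?o = "\<lambda>x::nat. 2 * x + 1"
  have injd: "inj ?d" and injo: "inj ?o" by (auto simp: inj_def)
  have fstU: "fst ?U = ?d ` fst G \<union> ?o ` fst H" and sndU: "snd ?U = image ?d ` snd G \<union> image ?o ` snd H"
    by (simp_all add: dunion_def)
  have fU: "finite (fst ?U)" using fG fH fstU by simp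
  have E1: "{?d a, ?d b} \<in> snd ?U \<longleftrightarrow> {a, b} \<in> snd G" for a b
  proof
    assume "{?d a, ?d b} \<in> snd ?U"
    then consider e where "e \<in> snd G" "?d ` e = {?d a, ?d b}" | e where "e \<in> snd H" "?o ` e = {?d a, ?d b}"
      using sndU by auto
    then show "{a, b} \<in> snd G"
    proof cases
      case 1
      then have "?d ` e = ?d ` {a, b}" by simp
      then have "e = {a, b}" by (rule iffD1[OF inj_image_eq_iff[OF injd]])
      then show ?thesis using 1 by simp
    next
      case 2
      then have "?d a \<in> ?o ` e" by simp
      then show ?thesis by auto presburger
    qed
  next
    assume "{a, b} \<in> snd G"
    then have "?d ` {a, b} \<in> snd ?U" using sndU by blast
    then show "{?d a, ?d b} \<in> snd ?U" by simp
  qed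
  have E2: "{?o a, ?o b} \<in> snd ?U \<longleftrightarrow> {a, b} \<in> snd H" for a b
  proof
    assume "{?o a, ?o b} \<in> snd ?U"
    then consider e where "e \<in> snd G" "?d ` e = {?o a, ?o b}" | e where "e \<in> snd H" "?o ` e = {?o a, ?o b}"
      using sndU by auto
    then show "{a, b} \<in> snd H"
    proof cases
      case 2
      then have "?o ` e = ?o ` {a, b}" by simp
      then have "e = {a, b}" by (rule iffD1[OF inj_image_eq_iff[OF injo]])
      then show ?thesis using 2 by simp
    next
      case 1
      then have "?o a \<in> ?d ` e" by simp
      then show ?thesis by auto presburger
    qed
  next
    assume "{a, b} \<in> snd H"
    then have "?o ` {a, b} \<in> snd ?U" using sndU by blast
    then show "{?o a, ?o b} \<in> snd ?U" by simp
  qed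
  have E3: "{?d a, ?o b} \<notin> snd ?U" for a b
  proof
    assume "{?d a, ?o b} \<in> snd ?U"
    then consider e where "e \<in> snd G" "?d ` e = {?d a, ?o b}" | e where "e \<in> snd H" "?o ` e = {?d a, ?o b}"
      using sndU by auto
    then show False
    proof cases
      case 1
      then have "?o b \<in> ?d ` e" by simp
      then show ?thesis by auto presburger
    next
      case 2
      then have "?d a \<in> ?o ` e" by simp
      then show ?thesis by auto presburger
    qed
  qed
  have c1: "image ?d ` cl G = {C \<in> cl ?U. C \<subseteq> ?d ` fst G}"
    by (rule cl_image[OF injd]) (use fstU E1 in auto)
  have c2: "image ?o ` cl H = {C \<in> cl ?U. C \<subseteq> ?o ` fst H}"
    by (rule cl_image[OF injo]) (use fstU E2 in auto)
  have split: "cl ?U = {C \<in> cl ?U. C \<subseteq> ?d ` fst G} \<union> {C \<in> cl ?U. C \<subseteq> ?o ` fst H}"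
  proof -
    have "C \<subseteq> ?d ` fst G \<or> C \<subseteq> ?o ` fst H" if C: "C \<in> cl ?U" for C
    proof (rule ccontr)
      assume "\<not> ?thesis"
      then obtain x y where xy: "x \<in> C" "y \<in> C" "x \<notin> ?d ` fst G" "y \<notin> ?o ` fst H" by blast
      have "C \<subseteq> fst ?U" using C by (auto simp: cl_def)
      then have "x \<in> ?o ` fst H" "y \<in> ?d ` fst G" using xy fstU by auto
      then obtain a b where ab: "x = ?o b" "y = ?d a" by blast
      then have "x \<noteq> y" by presburger
      then have "{y, x} \<in> snd ?U" using C xy by (auto simp: cl_def)
      then show False using E3 ab by simp
    qed
    then show ?thesis by blast
  qed
  have disj: "{C \<in> cl ?U. C \<subseteq> ?d ` fst G} \<inter> {C \<in> cl ?U. C \<subseteq> ?o ` fst H} = {}"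
  proof -
    have "?d ` fst G \<inter> ?o ` fst H = {}" by auto presburger
    then show ?thesis by (auto simp: cl_def)
  qed
  have fin1: "finite {C \<in> cl ?U. C \<subseteq> ?d ` fst G}" and fin2: "finite {C \<in> cl ?U. C \<subseteq> ?o ` fst H}"
    using cl_finite[OF fU] by auto
  have "euler_char ?U = (\<Sum>C\<in>cl ?U. - ((-1) ^ card C))" by (rule chi_alt[OF fU])
  also have "\<dots> = (\<Sum>C\<in>{C \<in> cl ?U. C \<subseteq> ?d ` fst G}. - ((-1) ^ card C))
      + (\<Sum>C\<in>{C \<in> cl ?U. C \<subseteq> ?o ` fst H}. - ((-1) ^ card C))"
    by (subst split, rule sum.union_disjoint[OF fin1 fin2 disj])
  also have "\<dots> = euler_char G + euler_char H"
    unfolding c1[symmetric] c2[symmetric] sum_image_cl[OF injd] sum_image_cl[OF injo]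
    by (simp add: chi_alt[OF fG] chi_alt[OF fH])
  finally show ?thesis .
qed

lemma chi_prod:
  assumes fG: "finite (fst G)" and fH: "finite (fst H)"
  shows "euler_char (G \<boxtimes>\<^sub>g H) = euler_char G * euler_char H"
proof -
  let ?P = "G \<boxtimes>\<^sub>g H"
  let ?V = "fst G" and ?W = "fst H"
  define R where "R = (\<lambda>K a c. a = c \<or> {a, c} \<in> snd (K::graph))"
  have fstP: "fst ?P = prod_encode ` (?V \<times> ?W)" by (simp add: sprod_def)
  have sndP: "snd ?P = {{prod_encode (a, b), prod_encode (c, d)} | a b c d.
          a \<in> ?V \<and> c \<in> ?V \<and> b \<in> ?W \<and> d \<in> ?W \<and> (a, b) \<noteq> (c, d) \<and>
          ((a = c \<and> {b, d} \<in> snd H) \<or> (b = d \<and> {a, c} \<in> snd G) \<or>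
           ({a, c} \<in> snd G \<and> {b, d} \<in> snd H))}" by (simp add: sprod_def)
  have fP: "finite (fst ?P)" using fstP fG fH by simp
  have EP: "{prod_encode x, prod_encode y} \<in> snd ?P \<longleftrightarrow> R G (fst x) (fst y) \<and> R H (snd x) (snd y)"
    if xy: "x \<in> ?V \<times> ?W" "y \<in> ?V \<times> ?W" "x \<noteq> y" for x y
  proof
    assume "{prod_encode x, prod_encode y} \<in> snd ?P"
    then obtain a b c d where eq: "{prod_encode x, prod_encode y} = {prod_encode (a, b), prod_encode (c, d)}"
      and cond: "(a = c \<and> {b, d} \<in> snd H) \<or> (b = d \<and> {a, c} \<in> snd G) \<or>
           ({a, c} \<in> snd G \<and> {b, d} \<in> snd H)"
      unfolding sndP by blast
    have RR: "R G a c \<and> R H b d" using cond by (auto simp: R_def)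
    have RR': "R G c a \<and> R H d b" using RR by (auto simp: R_def insert_commute)
    from eq have "(x = (a, b) \<and> y = (c, d)) \<or> (x = (c, d) \<and> y = (a, b))"
      by (auto simp: doubleton_eq_iff prod_encode_eq)
    then show "R G (fst x) (fst y) \<and> R H (snd x) (snd y)" using RR RR' by auto
  next
    assume r: "R G (fst x) (fst y) \<and> R H (snd x) (snd y)"
    obtain a b c d where x: "x = (a, b)" and y: "y = (c, d)" by (cases x, cases y) auto
    have "(a = c \<and> {b, d} \<in> snd H) \<or> (b = d \<and> {a, c} \<in> snd G) \<or>
           ({a, c} \<in> snd G \<and> {b, d} \<in> snd H)"
      using r xy x y by (auto simp: R_def)
    then show "{prod_encode x, prod_encode y} \<in> snd ?P"
      unfolding sndP using xy x y by blast
  qed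
  define Q where "Q = {S. S \<subseteq> ?V \<times> ?W \<and> fst ` S \<in> cl G \<and> snd ` S \<in> cl H}"
  have injpe: "inj prod_encode" by (rule inj_prod_encode)
  have clP: "cl ?P = image prod_encode ` Q"
  proof
    show "cl ?P \<subseteq> image prod_encode ` Q"
    proof
      fix C assume C: "C \<in> cl ?P"
      let ?S = "{x \<in> ?V \<times> ?W. prod_encode x \<in> C}"
      have CS: "prod_encode ` ?S = C" using C fstP by (auto simp: cl_def)
      have Sne: "?S \<noteq> {}" using C CS by (auto simp: cl_def)
      have Rxy: "R G (fst x) (fst y) \<and> R H (snd x) (snd y)" if "x \<in> ?S" "y \<in> ?S" for x y
      proof (cases "x = y")
        case True then show ?thesis by (simp add: R_def)
      next
        case False
        then have "prod_encode x \<noteq> prod_encode y" using injpe by (auto dest: injD)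
        then have "{prod_encode x, prod_encode y} \<in> snd ?P" using C that by (auto simp: cl_def)
        then show ?thesis using EP[of x y] that False by auto
      qed
      have "fst ` ?S \<in> cl G"
      proof -
        have "{a, c} \<in> snd G" if ac: "a \<in> fst ` ?S" "c \<in> fst ` ?S" "a \<noteq> c" for a c
        proof -
          obtain x y where "x \<in> ?S" "y \<in> ?S" "a = fst x" "c = fst y" using ac by blast
          then show ?thesis using Rxy[of x y] ac by (auto simp: R_def)
        qed
        then show ?thesis using Sne by (auto simp: cl_def)
      qed
      moreover have "snd ` ?S \<in> cl H"
      proof -
        have "{a, c} \<in> snd H" if ac: "a \<in> snd ` ?S" "c \<in> snd ` ?S" "a \<noteq> c" for a c
        proof -
          obtain x y where "x \<in> ?S" "y \<in> ?S" "a = snd x" "c = snd y" using ac by blast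
          then show ?thesis using Rxy[of x y] ac by (auto simp: R_def)
        qed
        then show ?thesis using Sne by (auto simp: cl_def)
      qed
      ultimately have "?S \<in> Q" unfolding Q_def by auto
      then show "C \<in> image prod_encode ` Q" using CS by blast
    qed
    show "image prod_encode ` Q \<subseteq> cl ?P"
    proof
      fix C assume "C \<in> image prod_encode ` Q"
      then obtain S where S: "S \<in> Q" and C: "C = prod_encode ` S" by blast
      have sub: "S \<subseteq> ?V \<times> ?W" and A: "fst ` S \<in> cl G" and B: "snd ` S \<in> cl H" using S by (auto simp: Q_def)
      have "{u, v} \<in> snd ?P" if uv: "u \<in> C" "v \<in> C" "u \<noteq> v" for u v
      proof -
        obtain x y where xy: "x \<in> S" "y \<in> S" "u = prod_encode x" "v = prod_encode y" using uv C by blast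
        then have "x \<noteq> y" using uv by auto
        have "R G (fst x) (fst y)"
        proof (cases "fst x = fst y")
          case False
          then show ?thesis using A xy by (auto simp: cl_def R_def)
        qed (simp add: R_def)
        moreover have "R H (snd x) (snd y)"
        proof (cases "snd x = snd y")
          case False
          then show ?thesis using B xy by (auto simp: cl_def R_def)
        qed (simp add: R_def)
        ultimately show ?thesis using EP[of x y] xy sub \<open>x \<noteq> y\<close> by auto
      qed
      moreover have "C \<subseteq> fst ?P" using sub C fstP by auto
      moreover have "C \<noteq> {}" using A C by (auto simp: cl_def)
      ultimately show "C \<in> cl ?P" by (auto simp: cl_def)
    qed
  qed
  have finQ: "finite Q"
    by (rule finite_subset[of _ "Pow (?V \<times> ?W)"]) (use fG fH in \<open>auto simp: Q_def\<close>)
  have "euler_char ?P = (\<Sum>S\<in>Q. - ((-1) ^ card S))"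
    using chi_alt[OF fP] clP sum_image_cl[OF injpe] by simp
  also have "\<dots> = (\<Sum>p\<in>cl G \<times> cl H. \<Sum>S\<in>{S\<in>Q. (fst ` S, snd ` S) = p}. - ((-1) ^ card S))"
    using finQ cl_finite[OF fG] cl_finite[OF fH] by (intro sum.group[symmetric]) (auto simp: Q_def)
  also have "\<dots> = (\<Sum>p\<in>cl G \<times> cl H. (- ((-1) ^ card (fst p))) * (- ((-1) ^ card (snd p))))"
  proof (rule sum.cong[OF refl])
    fix p assume p: "p \<in> cl G \<times> cl H"
    obtain A B where pAB: "p = (A, B)" by force
    have AB: "A \<in> cl G" "B \<in> cl H" using p pAB by auto
    have fA: "finite A" "A \<noteq> {}" using AB fG by (auto simp: cl_def intro: finite_subset)
    have fB: "finite B" "B \<noteq> {}" using AB fH by (auto simp: cl_def intro: finite_subset)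
    have "{S\<in>Q. (fst ` S, snd ` S) = p} = {S\<in>Pow (A\<times>B). fst ` S = A \<and> snd ` S = B}"
    proof -
      have AV: "A \<subseteq> ?V" and BW: "B \<subseteq> ?W" using AB by (auto simp: cl_def)
      have prodsub: "S \<subseteq> fst ` S \<times> snd ` S" for S :: "(nat \<times> nat) set"
        by (auto intro: rev_image_eqI)
      show ?thesis
      proof (intro set_eqI iffI)
        fix S assume "S \<in> {S\<in>Q. (fst ` S, snd ` S) = p}"
        then have "fst ` S = A" "snd ` S = B" using pAB by auto
        then show "S \<in> {S\<in>Pow (A\<times>B). fst ` S = A \<and> snd ` S = B}" using prodsub[of S] by auto
      next
        fix S assume S: "S \<in> {S\<in>Pow (A\<times>B). fst ` S = A \<and> snd ` S = B}"
        then have "S \<subseteq> ?V \<times> ?W" using AV BW by auto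
        then show "S \<in> {S\<in>Q. (fst ` S, snd ` S) = p}" using S AB pAB unfolding Q_def by auto
      qed
    qed
    then have "(\<Sum>S\<in>{S\<in>Q. (fst ` S, snd ` S) = p}. - ((-1::int) ^ card S)) = - gsum A B"
      by (simp add: gsum_def sum_negf)
    also have "\<dots> = (-1) ^ (card A + card B)" using gsum_val[OF fA fB] by simp
    finally show "(\<Sum>S\<in>{S\<in>Q. (fst ` S, snd ` S) = p}. - ((-1::int) ^ card S)) =
        (- ((-1) ^ card (fst p))) * (- ((-1) ^ card (snd p)))"
      using pAB by (simp add: power_add)
  qed
  also have "\<dots> = euler_char G * euler_char H"
    unfolding chi_alt[OF fG] chi_alt[OF fH] sum_product sum.cartesian_product
    by (simp add: case_prod_beta)
  finally show ?thesis .
qed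

lemma fin_dunion: "finite (fst G) \<Longrightarrow> finite (fst H) \<Longrightarrow> finite (fst (G \<oplus>\<^sub>g H))"
  by (simp add: dunion_def)

lemma fin_sprod: "finite (fst G) \<Longrightarrow> finite (fst H) \<Longrightarrow> finite (fst (G \<boxtimes>\<^sub>g H))"
  by (simp add: sprod_def)

lemma chi_empty: "euler_char empty_graph = 0"
proof -
  have "cl empty_graph = {}" by (auto simp: cl_def empty_graph_def)
  then show ?thesis using chi_alt[of empty_graph] by (simp add: empty_graph_def)
qed

lemma chi_K1: "euler_char K1 = 1"
proof -
  have "cl K1 = {{0}}" by (auto simp: cl_def K1_def)
  then show ?thesis using chi_alt[of K1] by (simp add: K1_def)
qed

theorem mainTheorem3:
  shows "(\<forall>p q. wf_gg p \<longrightarrow> wf_gg q \<longrightarrow> gg_eq p q \<longrightarrow> gg_chi p = gg_chi q)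
    \<and> gg_chi gg_zero = 0
    \<and> gg_chi gg_one = 1
    \<and> (\<forall>p q. wf_gg p \<longrightarrow> wf_gg q \<longrightarrow> gg_chi (gg_add p q) = gg_chi p + gg_chi q)
    \<and> (\<forall>p q. wf_gg p \<longrightarrow> wf_gg q \<longrightarrow> gg_chi (gg_mul p q) = gg_chi p * gg_chi q)"
proof (intro conjI allI impI)
  fix p q assume wp: "wf_gg p" and wq: "wf_gg q" and eq: "gg_eq p q"
  have f: "finite (fst (fst p))" "finite (fst (snd p))" "finite (fst (fst q))" "finite (fst (snd q))"
    using wp wq by (auto simp: wf_gg_def wf_graph_def)
  obtain K where K: "wf_graph K" and iso: "graph_iso (fst p \<oplus>\<^sub>g snd q \<oplus>\<^sub>g K) (snd p \<oplus>\<^sub>g fst q \<oplus>\<^sub>g K)"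
    using eq unfolding gg_eq_def by blast
  have fK: "finite (fst K)" using K by (simp add: wf_graph_def)
  have "euler_char (fst p \<oplus>\<^sub>g snd q \<oplus>\<^sub>g K) = euler_char (snd p \<oplus>\<^sub>g fst q \<oplus>\<^sub>g K)"
    by (rule chi_iso[OF iso]) (intro fin_dunion f fK)
  then have "euler_char (fst p) + euler_char (snd q) + euler_char K = euler_char (snd p) + euler_char (fst q) + euler_char K"
    by (simp add: chi_union fin_dunion f fK)
  then show "gg_chi p = gg_chi q" by (simp add: gg_chi_def)
next
  show "gg_chi gg_zero = 0" by (simp add: gg_chi_def gg_zero_def chi_empty)
next
  show "gg_chi gg_one = 1" by (simp add: gg_chi_def gg_one_def chi_empty chi_K1)
next
  fix p q assume wp: "wf_gg p" and wq: "wf_gg q"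
  have f: "finite (fst (fst p))" "finite (fst (snd p))" "finite (fst (fst q))" "finite (fst (snd q))"
    using wp wq by (auto simp: wf_gg_def wf_graph_def)
  show "gg_chi (gg_add p q) = gg_chi p + gg_chi q"
    by (simp add: gg_chi_def gg_add_def chi_union f)
next
  fix p q assume wp: "wf_gg p" and wq: "wf_gg q"
  have f: "finite (fst (fst p))" "finite (fst (snd p))" "finite (fst (fst q))" "finite (fst (snd q))"
    using wp wq by (auto simp: wf_gg_def wf_graph_def)
  show "gg_chi (gg_mul p q) = gg_chi p * gg_chi q"
    by (simp add: gg_chi_def gg_mul_def chi_union chi_prod fin_sprod f algebra_simps)
qed

end
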